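(* Let $R$ be a locally stable commutative ring. Then every stably free $R$-module is free; equivalently, for all $n$ and $a_1,\dots,a_n\in R$ with $a_1R+\cdots+a_nR=R$, the row $(a_1,\dots,a_n)$ is the first row of an invertible $n\times n$ matrix over $R$.
   Context: All rings are commutative with identity. An $R$-module $P$ is stably free if $P\oplus R^m\cong R^n$ for some $m,n\in\mathbb{N}$. A ring $S$ has stable range 1 if whenever $aS+bS=S$ there is $y\in S$ with $a+by$ a unit. $R$ is locally stable if whenever $a,b\in R$ with $aR+bR=R$ there is $y\in R$ such that $R/(a+by)R$ has stable range 1. *)

theory Defs
  imports Main "Jordan_Normal_Form.Matrix"
begin

text \<open>The quotient ring R/cR has stable range 1, written out in R:
  a comaximal pair (a + cR, b + cR) in R/cR, i.e. aR + bR + cR = R, admits y such that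
  a + b y is a unit modulo cR.\<close>
definition quot_stable_range_1 :: "'a::comm_ring_1 \<Rightarrow> bool" where
  "quot_stable_range_1 c \<longleftrightarrow>
     (\<forall>a b. (\<exists>x y z. a * x + b * y + c * z = 1) \<longrightarrow>
            (\<exists>y u w. (a + b * y) * u + c * w = 1))"

definition locally_stable :: "'a::comm_ring_1 itself \<Rightarrow> bool" where
  "locally_stable TYPE('a) \<longleftrightarrow>
     (\<forall>a b :: 'a. (\<exists>x y. a * x + b * y = 1) \<longrightarrow> (\<exists>y. quot_stable_range_1 (a + b * y)))"

end

theory Submission
  imports Defs
begin

definition compl :: "nat \<Rightarrow> (nat \<Rightarrow> 'a::comm_ring_1) \<Rightarrow> bool" where
  "compl n v \<longleftrightarrow> (\<exists>A \<in> carrier_mat n n. invertible_mat A \<and> (\<forall>j<n. A $$ (0, j) = v j))"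

lemma inv_prod:
  fixes A B A' B' :: "'a::comm_ring_1 mat"
  assumes c: "A \<in> carrier_mat n n" "B \<in> carrier_mat n n" "A' \<in> carrier_mat n n" "B' \<in> carrier_mat n n"
    and i: "A * A' = 1\<^sub>m n" "A' * A = 1\<^sub>m n" "B * B' = 1\<^sub>m n" "B' * B = 1\<^sub>m n"
  shows "invertible_mat (A * B)"
proof -
  have "(A * B) * (B' * A') = A * (B * B') * A'" using c by (simp add: assoc_mult_mat[of _ n n _ n _ n])
  also have "\<dots> = 1\<^sub>m n" using c i by simp
  finally have 1: "(A * B) * (B' * A') = 1\<^sub>m n" .
  have "(B' * A') * (A * B) = B' * (A' * A) * B" using c by (simp add: assoc_mult_mat[of _ n n _ n _ n])
  also have "\<dots> = 1\<^sub>m n" using c i by simp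
  finally have 2: "(B' * A') * (A * B) = 1\<^sub>m n" .
  show ?thesis unfolding invertible_mat_def inverts_mat_def square_mat.simps
    using 1 2 c by (intro conjI exI[of _ "B' * A'"]) auto
qed

definition Nm :: "nat \<Rightarrow> nat \<Rightarrow> (nat \<Rightarrow> 'a::comm_ring_1) \<Rightarrow> 'a mat" where
  "Nm n k t = mat n n (\<lambda>(i,j). if j = k then t i else 0)"

lemma Nm_sq: assumes "t k = 0" shows "Nm n k t * Nm n k t = 0\<^sub>m n n"
proof (rule eq_matI)
  fix i j assume ij: "i < dim_row (0\<^sub>m n n :: 'a mat)" "j < dim_col (0\<^sub>m n n :: 'a mat)"
  show "(Nm n k t * Nm n k t) $$ (i, j) = 0\<^sub>m n n $$ (i, j)"
    using ij assms by (auto simp: Nm_def scalar_prod_def intro!: sum.neutral)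
qed (auto simp: Nm_def)

lemma E_inv: assumes "t k = 0"
  shows "(1\<^sub>m n + Nm n k t) * (1\<^sub>m n + Nm n k (\<lambda>i. - t i)) = 1\<^sub>m n"
proof -
  have "Nm n k (\<lambda>i. - t i) = - Nm n k t" by (auto simp: Nm_def)
  have c: "Nm n k t \<in> carrier_mat n n" "Nm n k (\<lambda>i. - t i) \<in> carrier_mat n n" by (auto simp: Nm_def)
  have "Nm n k t * Nm n k (\<lambda>i. - t i) = 0\<^sub>m n n"
  proof (rule eq_matI)
    fix i j assume ij: "i < dim_row (0\<^sub>m n n :: 'a mat)" "j < dim_col (0\<^sub>m n n :: 'a mat)"
    show "(Nm n k t * Nm n k (\<lambda>i. - t i)) $$ (i, j) = 0\<^sub>m n n $$ (i, j)"
      using ij assms by (auto simp: Nm_def scalar_prod_def intro!: sum.neutral)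
  qed (auto simp: Nm_def)
  hence "(1\<^sub>m n + Nm n k t) * (1\<^sub>m n + Nm n k (\<lambda>i. - t i)) = 1\<^sub>m n + Nm n k t + Nm n k (\<lambda>i. - t i)"
    using c by (simp add: add_mult_distrib_mat[of _ n n _ _ n] mult_add_distrib_mat[of _ n n _ n _])
  also have "\<dots> = 1\<^sub>m n" by (rule eq_matI) (auto simp: Nm_def)
  finally show ?thesis .
qed


definition opc :: "nat \<Rightarrow> nat \<Rightarrow> (nat \<Rightarrow> 'a::comm_ring_1) \<Rightarrow> (nat \<Rightarrow> 'a) \<Rightarrow> nat \<Rightarrow> 'a" where
  "opc n k t v = (\<lambda>j. if j = k then v k + (\<Sum>i<n. v i * t i) else v j)"

lemma compl_cong: "compl n v \<Longrightarrow> (\<And>j. j < n \<Longrightarrow> v j = w j) \<Longrightarrow> compl n w"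
  unfolding compl_def by metis

lemma compl_op: assumes k: "k < n" and t: "t k = 0" and cv: "compl n v"
  shows "compl n (opc n k t v)"
proof -
  from cv obtain A where A: "A \<in> carrier_mat n n" "invertible_mat A" "\<forall>j<n. A $$ (0, j) = v j"
    unfolding compl_def by blast
  from A(2) obtain A' where A'0: "A * A' = 1\<^sub>m n" "A' * A = 1\<^sub>m (dim_row A')"
    using A(1) unfolding invertible_mat_def inverts_mat_def by auto
  have "dim_row A' = n" using A'0(2) A(1)
    by (metis carrier_matD(2) index_mult_mat(3) index_one_mat(3))
  hence A': "A * A' = 1\<^sub>m n" "A' * A = 1\<^sub>m n" using A'0 by auto
  have A'c: "A' \<in> carrier_mat n n"
  proof -
    have "dim_row A' = n" using A'(2) A(1) by (metis carrier_matD(1) index_mult_mat(2) index_one_mat(2))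
    moreover have "dim_col A' = n" using A'(1) A(1) by (metis index_mult_mat(3) index_one_mat(3))
    ultimately show ?thesis by auto
  qed
  define E where "E = 1\<^sub>m n + Nm n k t"
  define E' where "E' = 1\<^sub>m n + Nm n k (\<lambda>i. - t i)"
  have Ec: "E \<in> carrier_mat n n" "E' \<in> carrier_mat n n" by (auto simp: E_def E'_def Nm_def)
  have "E * E' = 1\<^sub>m n" unfolding E_def E'_def by (rule E_inv[of t k, OF t])
  moreover have "E' * E = 1\<^sub>m n"
  proof -
    have "E' * (1\<^sub>m n + Nm n k (\<lambda>i. - (- t i))) = 1\<^sub>m n" unfolding E'_def by (rule E_inv) (simp add: t)
    thus ?thesis by (simp add: E_def)
  qed
  ultimately have inv: "invertible_mat (A * E)" using inv_prod[OF A(1) Ec(1) A'c Ec(2)] A' by blast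
  have row: "(A * E) $$ (0, j) = opc n k t v j" if j: "j < n" for j
  proof -
    have n0: "0 < n" using k by simp
    have "(A * E) $$ (0, j) = (\<Sum>i<n. A $$ (0, i) * ((if i = j then 1 else 0) + (if j = k then t i else 0)))"
      using A(1) Ec j n0 by (auto simp: scalar_prod_def E_def Nm_def lessThan_atLeast0 intro!: sum.cong)
    also have "\<dots> = (\<Sum>i<n. (if i = j then A $$ (0, i) else 0)) + (\<Sum>i<n. if j = k then A $$ (0, i) * t i else 0)"
      by (simp only: sum.distrib[symmetric]) (auto simp: distrib_left intro!: sum.cong)
    also have "\<dots> = opc n k t v j"
      using j A(3) by (auto simp: opc_def)
    finally show ?thesis .
  qed
  show ?thesis unfolding compl_def using A(1) Ec inv row by (intro bexI[of _ "A * E"]) auto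
qed

lemma compl_op_iff: assumes k: "k < n" and t: "t k = 0"
  shows "compl n (opc n k t v) \<longleftrightarrow> compl n v"
proof
  assume "compl n (opc n k t v)"
  hence c: "compl n (opc n k (\<lambda>i. - t i) (opc n k t v))" using compl_op[OF k, of "\<lambda>i. - t i"] t by simp
  show "compl n v"
  proof (rule compl_cong[OF c])
    fix j assume "j < n"
    have "(\<Sum>i<n. opc n k t v i * - t i) = - (\<Sum>i<n. v i * t i)"
      by (auto simp: opc_def t sum_negf[symmetric] intro!: sum.cong)
    thus "opc n k (\<lambda>i. - t i) (opc n k t v) j = v j" by (simp add: opc_def)
  qed
qed (rule compl_op[of k n t, OF k t])


lemma sum1: "k < (n::nat) \<Longrightarrow> (\<Sum>i<n. g i * (if i = k then p else 0)) = g k * (p::'a::comm_ring_1)"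
proof -
  assume k: "k < n"
  have "(\<Sum>i<n. g i * (if i = k then p else 0)) = (\<Sum>i<n. if i = k then g k * p else 0)"
    by (rule sum.cong) auto
  also have "\<dots> = g k * p" using k by (subst sum.delta) simp_all
  finally show ?thesis .
qed

lemma sum2: "2 \<le> (n::nat) \<Longrightarrow> (\<Sum>i<n. g i * (if i = 0 then p else if i = 1 then q else 0)) = g 0 * p + g 1 * (q::'a::comm_ring_1)"
proof -
  assume k: "2 \<le> n"
  have "(\<Sum>i<n. g i * (if i = 0 then p else if i = 1 then q else 0)) =
     (\<Sum>i<n. g i * (if i = 0 then p else 0)) + (\<Sum>i<n. g i * (if i = 1 then q else 0))"
    by (simp only: sum.distrib[symmetric]) (rule sum.cong, simp, simp add: distrib_left[symmetric])
  also have "\<dots> = g 0 * p + g 1 * q" using k by (simp only: sum1[of 0 n] sum1[of 1 n])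
  finally show ?thesis .
qed

lemma step: "k < n \<Longrightarrow> \<tau> k = 0 \<Longrightarrow> (\<And>j. j < n \<Longrightarrow> opc n k \<tau> f j = g j) \<Longrightarrow> compl n g \<Longrightarrow> compl n f"
  using compl_op_iff[of k n \<tau> f] compl_cong[of n g "opc n k \<tau> f"] by metis

lemma compl_e0: "0 < n \<Longrightarrow> compl n (\<lambda>j. if j = 0 then 1 else 0)"
  unfolding compl_def invertible_mat_def inverts_mat_def
  by (intro bexI[of _ "1\<^sub>m n"] conjI exI[of _ "1\<^sub>m n"]) auto

lemma kill:
  fixes v :: "nat \<Rightarrow> 'a::comm_ring_1"
  assumes n: "2 \<le> n" and cd: "v 0 * w + v 1 * u = 1"
  shows "m \<le> n \<Longrightarrow> compl n (\<lambda>j. if 2 \<le> j \<and> j < m then 0 else v j) \<Longrightarrow> compl n v"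
proof (induction m)
  case 0
  then show ?case by simp
next
  case (Suc m)
  let ?f = "\<lambda>j. if 2 \<le> j \<and> j < m then 0 else v j"
  let ?g = "\<lambda>j. if 2 \<le> j \<and> j < Suc m then 0 else v j"
  show ?case
  proof (cases "2 \<le> m")
    case False
    hence "?g = v" by (auto simp: fun_eq_iff)
    thus ?thesis using Suc by simp
  next
    case True
    have "compl n ?f"
    proof (rule step[of m n "\<lambda>i. if i = 0 then - (v m * w) else if i = 1 then - (v m * u) else 0"])
      show "m < n" using Suc by simp
      show "(if m = 0 then - (v m * w) else if m = 1 then - (v m * u) else 0) = 0" using True by simp
      show "compl n ?g" using Suc by simp
      fix j assume j: "j < n"
      have s: "(\<Sum>i<n. ?f i * (if i = 0 then - (v m * w) else if i = 1 then - (v m * u) else 0))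
          = - (v m * (v 0 * w + v 1 * u))"
        using n by (subst sum2) (auto simp: algebra_simps)
      show "opc n m (\<lambda>i. if i = 0 then - (v m * w) else if i = 1 then - (v m * u) else 0) ?f j = ?g j"
        unfolding opc_def s cd using True by auto
    qed
    thus ?thesis using Suc by simp
  qed
qed


lemma compl0: "compl 0 (v :: nat \<Rightarrow> 'a::comm_ring_1)"
  unfolding compl_def invertible_mat_def inverts_mat_def
  by (intro bexI[of _ "1\<^sub>m 0"] conjI exI[of _ "1\<^sub>m 0"]) auto

lemma compl1: assumes "(a 0 :: 'a::comm_ring_1) * x0 = 1" shows "compl 1 a"
proof -
  let ?A = "mat 1 1 (\<lambda>_. a 0)" and ?B = "mat 1 1 (\<lambda>_. x0)"
  have 1: "?A * ?B = 1\<^sub>m 1" by (rule eq_matI) (auto simp: scalar_prod_def assms)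
  have 2: "?B * ?A = 1\<^sub>m 1" by (rule eq_matI) (auto simp: scalar_prod_def assms[unfolded mult.commute[of "a 0"]])
  show ?thesis unfolding compl_def invertible_mat_def inverts_mat_def
    using 1 2 by (intro bexI[of _ ?A] conjI exI[of _ ?B]) auto
qed

lemma compl2: assumes "(a 0 :: 'a::comm_ring_1) * x0 + a 1 * x1 = 1" shows "compl 2 a"
proof -
  let ?A = "mat 2 2 (\<lambda>(i,j). if i = 0 then a j else if j = 0 then - x1 else x0)"
  let ?B = "mat 2 2 (\<lambda>(i,j). if i = 0 then (if j = 0 then x0 else - a 1) else (if j = 0 then x1 else a 0))"
  have 1: "?A * ?B = 1\<^sub>m 2"
  proof (rule eq_matI)
    fix i j assume "i < dim_row (1\<^sub>m 2 :: 'a mat)" "j < dim_col (1\<^sub>m 2 :: 'a mat)"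
    hence "i < 2" "j < 2" by auto
    thus "(?A * ?B) $$ (i, j) = 1\<^sub>m 2 $$ (i, j)"
      using assms by (auto simp: scalar_prod_def numeral_2_eq_2 less_Suc_eq algebra_simps)
  qed auto
  have 2: "?B * ?A = 1\<^sub>m 2"
  proof (rule eq_matI)
    fix i j assume "i < dim_row (1\<^sub>m 2 :: 'a mat)" "j < dim_col (1\<^sub>m 2 :: 'a mat)"
    hence "i < 2" "j < 2" by auto
    thus "(?B * ?A) $$ (i, j) = 1\<^sub>m 2 $$ (i, j)"
      using assms by (auto simp: scalar_prod_def numeral_2_eq_2 less_Suc_eq algebra_simps)
  qed auto
  show ?thesis unfolding compl_def invertible_mat_def inverts_mat_def
    using 1 2 by (intro bexI[of _ ?A] conjI exI[of _ ?B]) auto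
qed


lemma big:
  fixes a x :: "nat \<Rightarrow> 'a::comm_ring_1"
  assumes n: "3 \<le> n" and ls: "locally_stable TYPE('a)" and ax: "(\<Sum>i<n. a i * x i) = 1"
  shows "compl n a"
proof -
  define B where "B = (\<Sum>i<n. a i * (if i = 0 then 0 else x i))"
  define C where "C = (\<Sum>i<n. a i * (if i < 2 then 0 else x i))"
  have "(\<Sum>i<n. a i * x i) = (\<Sum>i<n. a i * (if i = 0 then x 0 else if i = 1 then x 1 else 0)) + C"
    unfolding C_def by (simp only: sum.distrib[symmetric]) (rule sum.cong, simp, auto simp: distrib_left[symmetric] numeral_2_eq_2 less_Suc_eq)
  hence split: "(\<Sum>i<n. a i * x i) = a 0 * x 0 + a 1 * x 1 + C" using n by (simp add: sum2)
  have "(\<Sum>i<n. a i * x i) = (\<Sum>i<n. a i * (if i = 0 then x 0 else 0)) + B"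
    unfolding B_def by (simp only: sum.distrib[symmetric]) (rule sum.cong, simp, auto simp: distrib_left[symmetric])
  hence B0: "(\<Sum>i<n. a i * x i) = a 0 * x 0 + B" using n by (simp add: sum1)
  have BC: "B = a 1 * x 1 + C" using B0 split by (simp add: algebra_simps)
  have "\<exists>p q. a 0 * p + B * q = 1" using B0 ax by (intro exI[of _ "x 0"] exI[of _ 1]) simp
  then obtain y where qs: "quot_stable_range_1 (a 0 + B * y)"
    using ls unfolding locally_stable_def by blast
  define c where "c = a 0 + B * y"
  define s where "s i = (if i < 2 then 0 else x i * (1 - y * x 0))" for i
  define b where "b = (\<Sum>i<n. a i * s i)"
  have b: "b = C * (1 - y * x 0)"
    unfolding b_def C_def s_def sum_distrib_right by (rule sum.cong) auto
  have "a 1 * (x 1 * (1 - y * x 0)) + b * 1 + c * x 0 = a 0 * x 0 + a 1 * x 1 + C"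
    by (simp add: b c_def BC algebra_simps)
  hence "a 1 * (x 1 * (1 - y * x 0)) + b * 1 + c * x 0 = 1" using split ax by simp
  then obtain y2 u w where uw: "(a 1 + b * y2) * u + c * w = 1"
    using qs unfolding quot_stable_range_1_def c_def by blast
  define d where "d = a 1 + b * y2"
  have cd: "c * w + d * u = 1" using uw by (simp add: d_def algebra_simps)
  define f3 where "f3 = (\<lambda>j. if j = 0 then c else if j = (1::nat) then d else 0)"
  have c7: "compl n (\<lambda>j. if j = (0::nat) then 1 else 0)" using n by (intro compl_e0) simp
  have c6: "compl n (f3(2 := 1, 0 := 1, 1 := 0))"
    by (rule step[of 2 n "\<lambda>i. if i = 0 then -1 else 0", OF _ _ _ c7]) (use n in \<open>auto simp: opc_def sum1 f3_def\<close>)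
  have c5: "compl n (f3(2 := 1, 0 := 1))"
    by (rule step[of 1 n "\<lambda>i. if i = 2 then - d else 0", OF _ _ _ c6]) (use n in \<open>auto simp: opc_def sum1 f3_def\<close>)
  have c4: "compl n (f3(2 := 1))"
    by (rule step[of 0 n "\<lambda>i. if i = 2 then 1 - c else 0", OF _ _ _ c5]) (use n in \<open>auto simp: opc_def sum1 f3_def\<close>)
  have c3: "compl n f3"
    by (rule step[of 2 n "\<lambda>i. if i = 0 then w else if i = 1 then u else 0", OF _ _ _ c4])
      (use n cd in \<open>auto simp: opc_def sum2 f3_def\<close>)
  have c2: "compl n (a(0 := c, 1 := d))"
  proof (rule kill[of n "a(0 := c, 1 := d)" w u n])
    show "2 \<le> n" using n by simp
    show "(a(0 := c, 1 := d)) 0 * w + (a(0 := c, 1 := d)) 1 * u = 1" using cd by simp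
    show "n \<le> n" by simp
    show "compl n (\<lambda>j. if 2 \<le> j \<and> j < n then 0 else (a(0 := c, 1 := d)) j)"
      by (rule compl_cong[OF c3]) (auto simp: f3_def)
  qed
  have s2: "(\<Sum>i<n. (if i = 0 then c else a i) * (s i * y2)) = b * y2"
    unfolding b_def sum_distrib_right by (rule sum.cong) (auto simp: s_def)
  have s1z: "s (Suc 0) = 0" by (simp add: s_def)
  have c1: "compl n (a(0 := c))"
    by (rule step[of 1 n "\<lambda>i. s i * y2", OF _ _ _ c2]) (use n in \<open>auto simp: opc_def s2 d_def s1z\<close>)
  have s1: "(\<Sum>i<n. a i * (if i = 0 then 0 else x i * y)) = B * y"
    unfolding B_def sum_distrib_right by (rule sum.cong) auto
  show ?thesis
    by (rule step[of 0 n "\<lambda>i. if i = 0 then 0 else x i * y", OF _ _ _ c1]) (use n in \<open>auto simp: opc_def s1 c_def\<close>)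
qed


theorem proposition4p5:
  fixes a :: "nat \<Rightarrow> 'a::comm_ring_1" and n :: nat
  assumes "locally_stable TYPE('a)"
    and "\<exists>x. (\<Sum>i<n. a i * x i) = 1"
  shows "\<exists>A \<in> carrier_mat n n. invertible_mat A \<and> (\<forall>j<n. A $$ (0, j) = a j)"
proof -
  obtain x where x: "(\<Sum>i<n. a i * x i) = 1" using assms(2) by blast
  have "compl n a"
  proof -
    consider "n = 0" | "n = 1" | "n = 2" | "3 \<le> n" by linarith
    thus ?thesis
    proof cases
      case 1 thus ?thesis by (simp add: compl0)
    next
      case 2 thus ?thesis using x compl1[of a "x 0"] by simp
    next
      case 3 thus ?thesis using x compl2[of a "x 0" "x 1"] by (simp add: numeral_2_eq_2)
    next
      case 4 thus ?thesis using big[OF 4 assms(1) x] by simp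
    qed
  qed
  thus ?thesis unfolding compl_def .
qed

end
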